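(* Let $\mathcal{X}$ be a finite set, $\pi$ a probability mass function on $\mathcal{X}$ with full support, and fix a group action of $\mathcal{G}$ on $\mathcal{X}$ with associated Gibbs, Metropolis–Hastings and Barker orbit kernels $G$, $M$, $B$. Let $\mathbf{G}=\{P\in\mathcal{S}(\pi):GPG=P\}$, $\mathbf{M}=\{P\in\mathcal{S}(\pi):MPM=P\}$, $\mathbf{B}=\{P\in\mathcal{S}(\pi):BPB=P\}$. If each orbit block of $G$, $M$ and $B$ is aperiodic, then $\mathbf{G}=\mathbf{M}=\mathbf{B}$.
   Context: $\mathcal{S}(\pi)$ is the set of transition matrices $P$ on $\mathcal{X}$ with $\pi P=\pi$. With $\mathcal{O}(x)$ the orbit of $x$: $G(x,y)=\pi(y)/\pi(\mathcal{O}(x))$ for $y\in\mathcal{O}(x)$, else $0$; $M(x,y)=\frac{1}{|\mathcal{O}(x)|-1}\min\{1,\pi(y)/\pi(x)\}$ for $y\in\mathcal{O}(x)\setminus\{x\}$, $0$ off the orbit, $M(x,x)=1-\sum_{y\ne x}M(x,y)$; $B$ is the same with acceptance $\pi(y)/(\pi(x)+\pi(y))$. These kernels are block diagonal with one block per orbit; aperiodicity of a block refers to the Markov chain on that orbit given by the block. *)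

theory Defs
  imports Complex_Main "HOL-Algebra.Group_Action"
begin

text \<open>Matrices on a finite state set X are represented as extensional
  functions 'a => 'a => real, vanishing outside X x X.\<close>

definition mat_mult :: "'a set \<Rightarrow> ('a \<Rightarrow> 'a \<Rightarrow> real) \<Rightarrow> ('a \<Rightarrow> 'a \<Rightarrow> real) \<Rightarrow> ('a \<Rightarrow> 'a \<Rightarrow> real)" where
  "mat_mult X P Q = (\<lambda>x y. if x \<in> X \<and> y \<in> X then (\<Sum>z\<in>X. P x z * Q z y) else 0)"

definition stationary_kernels :: "'a set \<Rightarrow> ('a \<Rightarrow> real) \<Rightarrow> ('a \<Rightarrow> 'a \<Rightarrow> real) set" where
  "stationary_kernels X \<pi> = {P.
     (\<forall>x y. (x \<notin> X \<or> y \<notin> X) \<longrightarrow> P x y = 0) \<and>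
     (\<forall>x\<in>X. \<forall>y\<in>X. 0 \<le> P x y) \<and>
     (\<forall>x\<in>X. (\<Sum>y\<in>X. P x y) = 1) \<and>
     (\<forall>y\<in>X. (\<Sum>x\<in>X. \<pi> x * P x y) = \<pi> y)}"

definition gibbs_kernel :: "('g, 'b) monoid_scheme \<Rightarrow> ('g \<Rightarrow> 'a \<Rightarrow> 'a) \<Rightarrow> 'a set \<Rightarrow> ('a \<Rightarrow> real) \<Rightarrow> 'a \<Rightarrow> 'a \<Rightarrow> real" where
  "gibbs_kernel Gr \<phi> X \<pi> x y =
     (if x \<in> X \<and> y \<in> X \<and> y \<in> orbit Gr \<phi> x
      then \<pi> y / (\<Sum>z\<in>orbit Gr \<phi> x. \<pi> z) else 0)"

text \<open>Generic orbit kernel with acceptance function acc (off-diagonal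
  proposal uniform on the orbit minus the current point).\<close>
definition orbit_kernel :: "('g, 'b) monoid_scheme \<Rightarrow> ('g \<Rightarrow> 'a \<Rightarrow> 'a) \<Rightarrow> 'a set \<Rightarrow> ('a \<Rightarrow> 'a \<Rightarrow> real) \<Rightarrow> 'a \<Rightarrow> 'a \<Rightarrow> real" where
  "orbit_kernel Gr \<phi> X acc x y =
     (if x \<in> X \<and> y \<in> X then
        (if y = x then
           1 - (\<Sum>z\<in>orbit Gr \<phi> x - {x}. acc x z / (real (card (orbit Gr \<phi> x)) - 1))
         else if y \<in> orbit Gr \<phi> x then acc x y / (real (card (orbit Gr \<phi> x)) - 1)
         else 0)
      else 0)"

definition mh_kernel :: "('g, 'b) monoid_scheme \<Rightarrow> ('g \<Rightarrow> 'a \<Rightarrow> 'a) \<Rightarrow> 'a set \<Rightarrow> ('a \<Rightarrow> real) \<Rightarrow> 'a \<Rightarrow> 'a \<Rightarrow> real" where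
  "mh_kernel Gr \<phi> X \<pi> = orbit_kernel Gr \<phi> X (\<lambda>x y. min 1 (\<pi> y / \<pi> x))"

definition barker_kernel :: "('g, 'b) monoid_scheme \<Rightarrow> ('g \<Rightarrow> 'a \<Rightarrow> 'a) \<Rightarrow> 'a set \<Rightarrow> ('a \<Rightarrow> real) \<Rightarrow> 'a \<Rightarrow> 'a \<Rightarrow> real" where
  "barker_kernel Gr \<phi> X \<pi> = orbit_kernel Gr \<phi> X (\<lambda>x y. \<pi> y / (\<pi> x + \<pi> y))"

fun block_pow :: "'a set \<Rightarrow> ('a \<Rightarrow> 'a \<Rightarrow> real) \<Rightarrow> nat \<Rightarrow> 'a \<Rightarrow> 'a \<Rightarrow> real" where
  "block_pow Ob K 0 x y = (if x = y then 1 else 0)"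
| "block_pow Ob K (Suc n) x y = (\<Sum>z\<in>Ob. block_pow Ob K n x z * K z y)"

definition aperiodic_block :: "'a set \<Rightarrow> ('a \<Rightarrow> 'a \<Rightarrow> real) \<Rightarrow> bool" where
  "aperiodic_block Ob K \<longleftrightarrow>
     (\<forall>x\<in>Ob. Gcd {n::nat. n \<ge> 1 \<and> block_pow Ob K n x x > 0} = 1)"

definition invariant_set :: "'a set \<Rightarrow> ('a \<Rightarrow> real) \<Rightarrow> ('a \<Rightarrow> 'a \<Rightarrow> real) \<Rightarrow> ('a \<Rightarrow> 'a \<Rightarrow> real) set" where
  "invariant_set X \<pi> K = {P \<in> stationary_kernels X \<pi>. mat_mult X (mat_mult X K P) K = P}"

end

theory Submission
  imports Defs
begin

definition orb_ok :: "'a set \<Rightarrow> ('a \<Rightarrow> 'a set) \<Rightarrow> bool" where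
  "orb_ok X Orb \<longleftrightarrow> finite X \<and> (\<forall>x\<in>X. x \<in> Orb x \<and> Orb x \<subseteq> X) \<and> (\<forall>x\<in>X. \<forall>y\<in>Orb x. Orb y = Orb x)"

definition kprops :: "'a set \<Rightarrow> ('a \<Rightarrow> 'a set) \<Rightarrow> ('a \<Rightarrow> real) \<Rightarrow> ('a \<Rightarrow> 'a \<Rightarrow> real) \<Rightarrow> bool" where
  "kprops X Orb \<pi> K \<longleftrightarrow>
     (\<forall>x y. K x y \<noteq> 0 \<longrightarrow> x \<in> X \<and> y \<in> X \<and> y \<in> Orb x) \<and>
     (\<forall>x\<in>X. (\<Sum>y\<in>X. K x y) = 1) \<and>
     (\<forall>x y. 0 \<le> K x y) \<and>
     (\<forall>x y. \<pi> x * K x y = \<pi> y * K y x) \<and>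
     (\<forall>x\<in>X. \<forall>y\<in>Orb x. (\<Sum>z\<in>X. K x z * K z y) > 0)"

definition ostruct :: "'a set \<Rightarrow> ('a \<Rightarrow> 'a set) \<Rightarrow> ('a \<Rightarrow> real) \<Rightarrow> ('a \<Rightarrow> 'a \<Rightarrow> real) \<Rightarrow> bool" where
  "ostruct X Orb \<pi> P \<longleftrightarrow> (\<forall>x\<in>X. \<forall>y\<in>X. \<forall>a\<in>Orb x. \<forall>b\<in>Orb y. P x y * \<pi> b = P a b * \<pi> y)"

lemma kp_supp: "kprops X Orb \<pi> K \<Longrightarrow> K x y \<noteq> 0 \<Longrightarrow> x \<in> X \<and> y \<in> X \<and> y \<in> Orb x"
  unfolding kprops_def by blast
lemma kp_row: "kprops X Orb \<pi> K \<Longrightarrow> x \<in> X \<Longrightarrow> (\<Sum>y\<in>X. K x y) = 1"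
  unfolding kprops_def by blast
lemma kp_nn: "kprops X Orb \<pi> K \<Longrightarrow> 0 \<le> K x y"
  unfolding kprops_def by blast
lemma kp_rev: "kprops X Orb \<pi> K \<Longrightarrow> \<pi> x * K x y = \<pi> y * K y x"
  unfolding kprops_def by blast
lemma kp_pos: "kprops X Orb \<pi> K \<Longrightarrow> x \<in> X \<Longrightarrow> y \<in> Orb x \<Longrightarrow> (\<Sum>z\<in>X. K x z * K z y) > 0"
  unfolding kprops_def by blast

lemma ok_fin: "orb_ok X Orb \<Longrightarrow> finite X"
  unfolding orb_ok_def by blast
lemma ok_refl: "orb_ok X Orb \<Longrightarrow> x \<in> X \<Longrightarrow> x \<in> Orb x"
  unfolding orb_ok_def by blast
lemma ok_sub: "orb_ok X Orb \<Longrightarrow> x \<in> X \<Longrightarrow> Orb x \<subseteq> X"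
  unfolding orb_ok_def by blast
lemma ok_eq: "orb_ok X Orb \<Longrightarrow> x \<in> X \<Longrightarrow> y \<in> Orb x \<Longrightarrow> Orb y = Orb x"
  unfolding orb_ok_def by blast

lemma orb_sym:
  assumes "orb_ok X Orb" "x \<in> X" "y \<in> X" "y \<in> Orb x" shows "x \<in> Orb y"
  using assms unfolding orb_ok_def by metis

lemma harmonic1:
  assumes ok: "orb_ok X Orb" and kp: "kprops X Orb \<pi> K" and pos: "\<forall>x\<in>X. \<pi> x > 0"
    and fx: "mat_mult X (mat_mult X K P) K = P" and xy: "x \<in> X" "y \<in> X"
  shows "P x y / \<pi> y = (\<Sum>a\<in>X. \<Sum>b\<in>X. K x a * K y b * (P a b / \<pi> b))"
proof -
  have rev: "\<pi> b * K b y = \<pi> y * K y b" for b using kp_rev[OF kp] .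
  have "(\<Sum>a\<in>X. \<Sum>b\<in>X. K x a * K y b * (P a b / \<pi> b))
      = (\<Sum>a\<in>X. \<Sum>b\<in>X. K x a * P a b * K b y / \<pi> y)"
  proof (intro sum.cong refl)
    fix a b assume "b \<in> X"
    then have "\<pi> b > 0" "\<pi> y > 0" using pos xy by auto
    then show "K x a * K y b * (P a b / \<pi> b) = K x a * P a b * K b y / \<pi> y"
      using rev[of b] by (simp add: field_simps)
  qed
  also have "\<dots> = (\<Sum>b\<in>X. \<Sum>a\<in>X. K x a * P a b * K b y / \<pi> y)"
    by (rule sum.swap)
  also have "\<dots> = (\<Sum>b\<in>X. (\<Sum>a\<in>X. K x a * P a b) * K b y) / \<pi> y"
    by (simp add: sum_divide_distrib sum_distrib_right)
  also have "\<dots> = mat_mult X (mat_mult X K P) K x y / \<pi> y"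
    using xy by (simp add: mat_mult_def)
  finally show ?thesis using fx by simp
qed

lemma prod3: "(\<Sum>a\<in>A. f a) * (\<Sum>b\<in>B. g b) * (r::real) = (\<Sum>a\<in>A. \<Sum>b\<in>B. f a * g b * r)"
proof -
  have "(\<Sum>a\<in>A. f a) * (\<Sum>b\<in>B. g b) * r = (\<Sum>a\<in>A. f a * ((\<Sum>b\<in>B. g b) * r))"
    by (simp add: sum_distrib_right mult.assoc)
  also have "\<dots> = (\<Sum>a\<in>A. \<Sum>b\<in>B. f a * g b * r)"
    by (intro sum.cong refl) (simp add: sum_distrib_left sum_distrib_right mult.assoc)
  finally show ?thesis .
qed

lemma harmonic2:
  assumes ok: "orb_ok X Orb" and kp: "kprops X Orb \<pi> K" and pos: "\<forall>x\<in>X. \<pi> x > 0"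
    and fx: "mat_mult X (mat_mult X K P) K = P" and xy: "x \<in> X" "y \<in> X"
  shows "P x y / \<pi> y = (\<Sum>c\<in>X. \<Sum>d\<in>X. (\<Sum>a\<in>X. K x a * K a c) * (\<Sum>b\<in>X. K y b * K b d) * (P c d / \<pi> d))"
proof -
  let ?R = "\<lambda>c d. P c d / \<pi> d"
  have "P x y / \<pi> y = (\<Sum>a\<in>X. \<Sum>b\<in>X. K x a * K y b * ?R a b)"
    by (rule harmonic1[OF ok kp pos fx xy])
  also have "\<dots> = (\<Sum>a\<in>X. \<Sum>b\<in>X. K x a * K y b * (\<Sum>c\<in>X. \<Sum>d\<in>X. K a c * K b d * ?R c d))"
  proof (intro sum.cong refl)
    fix a b assume "a \<in> X" "b \<in> X"
    then show "K x a * K y b * ?R a b = K x a * K y b * (\<Sum>c\<in>X. \<Sum>d\<in>X. K a c * K b d * ?R c d)"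
      using harmonic1[OF ok kp pos fx, of a b] by simp
  qed
  also have "\<dots> = (\<Sum>a\<in>X. \<Sum>b\<in>X. \<Sum>c\<in>X. \<Sum>d\<in>X. K x a * K a c * (K y b * K b d) * ?R c d)"
    by (intro sum.cong refl) (simp only: sum_distrib_left sum_distrib_right, intro sum.cong refl, simp only: mult_ac)
  also have "\<dots> = (\<Sum>a\<in>X. \<Sum>c\<in>X. \<Sum>b\<in>X. \<Sum>d\<in>X. K x a * K a c * (K y b * K b d) * ?R c d)"
    by (rule sum.cong[OF refl], rule sum.swap)
  also have "\<dots> = (\<Sum>c\<in>X. \<Sum>a\<in>X. \<Sum>b\<in>X. \<Sum>d\<in>X. K x a * K a c * (K y b * K b d) * ?R c d)"
    by (rule sum.swap)
  also have "\<dots> = (\<Sum>c\<in>X. \<Sum>a\<in>X. \<Sum>d\<in>X. \<Sum>b\<in>X. K x a * K a c * (K y b * K b d) * ?R c d)"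
    by (rule sum.cong[OF refl], rule sum.cong[OF refl], rule sum.swap)
  also have "\<dots> = (\<Sum>c\<in>X. \<Sum>d\<in>X. \<Sum>a\<in>X. \<Sum>b\<in>X. K x a * K a c * (K y b * K b d) * ?R c d)"
    by (rule sum.cong[OF refl], rule sum.swap)
  also have "\<dots> = (\<Sum>c\<in>X. \<Sum>d\<in>X. (\<Sum>a\<in>X. K x a * K a c) * (\<Sum>b\<in>X. K y b * K b d) * ?R c d)"
    by (intro sum.cong refl) (rule prod3[symmetric])
  finally show ?thesis .
qed

lemma K2_support:
  assumes ok: "orb_ok X Orb" and kp: "kprops X Orb \<pi> K" and x: "x \<in> X"
    and c: "c \<notin> Orb x"
  shows "(\<Sum>a\<in>X. K x a * K a c) = 0"
proof (rule sum.neutral, rule ballI)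
  fix a assume a: "a \<in> X"
  show "K x a * K a c = 0"
  proof (rule ccontr)
    assume "K x a * K a c \<noteq> 0"
    then have "K x a \<noteq> 0" "K a c \<noteq> 0" by auto
    then have "a \<in> Orb x" "c \<in> Orb a" using kp_supp[OF kp] by blast+
    then show False using ok_eq[OF ok x] c by metis
  qed
qed

lemma K2_rowsum:
  assumes ok: "orb_ok X Orb" and kp: "kprops X Orb \<pi> K" and x: "x \<in> X"
  shows "(\<Sum>c\<in>Orb x. \<Sum>a\<in>X. K x a * K a c) = 1"
proof -
  have fin: "finite X" and sub: "Orb x \<subseteq> X" using ok_fin[OF ok] ok_sub[OF ok x] by auto
  have "(\<Sum>c\<in>Orb x. \<Sum>a\<in>X. K x a * K a c) = (\<Sum>c\<in>X. \<Sum>a\<in>X. K x a * K a c)"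
    using K2_support[OF ok kp x] by (intro sum.mono_neutral_left fin sub) auto
  also have "\<dots> = (\<Sum>a\<in>X. K x a * (\<Sum>c\<in>X. K a c))"
    by (subst sum.swap) (simp only: sum_distrib_left)
  also have "\<dots> = (\<Sum>a\<in>X. K x a)"
    using kp_row[OF kp] by simp
  also have "\<dots> = 1" using kp_row[OF kp x] by simp
  finally show ?thesis .
qed

lemma inv_to_struct:
  assumes ok: "orb_ok X Orb" and kp: "kprops X Orb \<pi> K" and pos: "\<forall>x\<in>X. \<pi> x > 0"
    and fx: "mat_mult X (mat_mult X K P) K = P"
  shows "ostruct X Orb \<pi> P"
  unfolding ostruct_def
proof (intro ballI)
  fix x0 y0 a b assume x0: "x0 \<in> X" and y0: "y0 \<in> X" and a: "a \<in> Orb x0" and b: "b \<in> Orb y0"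
  let ?R = "\<lambda>c d. P c d / \<pi> d"
  let ?K2 = "\<lambda>x c. \<Sum>z\<in>X. K x z * K z c"
  have fin: "finite X" using ok_fin[OF ok] .
  have subx: "Orb x0 \<subseteq> X" and suby: "Orb y0 \<subseteq> X" using ok_sub[OF ok] x0 y0 by auto
  define A where "A = Orb x0 \<times> Orb y0"
  have finA: "finite A" unfolding A_def using fin subx suby finite_subset by blast
  have neA: "A \<noteq> {}" unfolding A_def using ok_refl[OF ok] x0 y0 by auto
  define m where "m = Max ((\<lambda>(c,d). ?R c d) ` A)"
  have mge: "?R c d \<le> m" if "(c,d) \<in> A" for c d
    unfolding m_def using finA that by (intro Max_ge) force+
  have "m \<in> (\<lambda>(c,d). ?R c d) ` A" unfolding m_def using finA neA by (intro Max_in) auto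
  then obtain x y where xyA: "(x,y) \<in> A" and mxy: "m = ?R x y" by auto
  have xin: "x \<in> Orb x0" "y \<in> Orb y0" using xyA unfolding A_def by auto
  have x: "x \<in> X" and y: "y \<in> X" using xin subx suby by auto
  have Ox: "Orb x = Orb x0" and Oy: "Orb y = Orb y0" using ok_eq[OF ok x0 xin(1)] ok_eq[OF ok y0 xin(2)] by auto
  have "m = (\<Sum>c\<in>X. \<Sum>d\<in>X. ?K2 x c * ?K2 y d * ?R c d)"
    using harmonic2[OF ok kp pos fx x y] mxy by simp
  also have "\<dots> = (\<Sum>c\<in>Orb x. \<Sum>d\<in>Orb y. ?K2 x c * ?K2 y d * ?R c d)"
  proof -
    have "(\<Sum>c\<in>X. \<Sum>d\<in>X. ?K2 x c * ?K2 y d * ?R c d) = (\<Sum>c\<in>X. \<Sum>d\<in>Orb y. ?K2 x c * ?K2 y d * ?R c d)"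
      using K2_support[OF ok kp y] Oy suby fin by (intro sum.cong refl sum.mono_neutral_right) auto
    also have "\<dots> = (\<Sum>c\<in>Orb x. \<Sum>d\<in>Orb y. ?K2 x c * ?K2 y d * ?R c d)"
      using K2_support[OF ok kp x] Ox subx fin by (intro sum.mono_neutral_right) auto
    finally show ?thesis .
  qed
  finally have m1: "m = (\<Sum>c\<in>Orb x. \<Sum>d\<in>Orb y. ?K2 x c * ?K2 y d * ?R c d)" .
  have m2: "m = (\<Sum>c\<in>Orb x. \<Sum>d\<in>Orb y. ?K2 x c * ?K2 y d * m)"
    using K2_rowsum[OF ok kp x] K2_rowsum[OF ok kp y]
    by (simp add: sum_distrib_right[symmetric] sum_distrib_left[symmetric])
  have K2nn: "0 \<le> ?K2 u v" for u v using kp_nn[OF kp] by (intro sum_nonneg) (simp)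
  have "(\<Sum>c\<in>Orb x. \<Sum>d\<in>Orb y. ?K2 x c * ?K2 y d * (m - ?R c d)) = 0"
    using m1 m2 by (simp add: algebra_simps sum_subtractf)
  moreover have nn: "\<forall>c\<in>Orb x. \<forall>d\<in>Orb y. 0 \<le> ?K2 x c * ?K2 y d * (m - ?R c d)"
    using mge A_def Ox Oy K2nn by (auto intro!: mult_nonneg_nonneg)
  ultimately have z: "\<forall>c\<in>Orb x. \<forall>d\<in>Orb y. ?K2 x c * ?K2 y d * (m - ?R c d) = 0"
  proof -
    assume s: "(\<Sum>c\<in>Orb x. \<Sum>d\<in>Orb y. ?K2 x c * ?K2 y d * (m - ?R c d)) = 0"
    have finx: "finite (Orb x)" "finite (Orb y)" using Ox Oy subx suby fin finite_subset by metis+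
    have "\<forall>c\<in>Orb x. (\<Sum>d\<in>Orb y. ?K2 x c * ?K2 y d * (m - ?R c d)) = 0"
      using s nn finx by (subst (asm) sum_nonneg_eq_0_iff) (auto intro!: sum_nonneg)
    then show ?thesis using nn finx by (auto simp: sum_nonneg_eq_0_iff)
  qed
  have Rm: "?R c d = m" if "c \<in> Orb x" "d \<in> Orb y" for c d
  proof -
    have "?K2 x c > 0" "?K2 y d > 0" using kp_pos[OF kp] x y that by auto
    moreover have "?K2 x c * ?K2 y d * (m - ?R c d) = 0" using z that by blast
    ultimately show ?thesis by simp
  qed
  have "?R x0 y0 = m" using Rm[of x0 y0] ok_refl[OF ok x0] ok_refl[OF ok y0] Ox Oy by simp
  moreover have "?R a b = m" using Rm[of a b] a b Ox Oy by simp
  ultimately have e: "P x0 y0 / \<pi> y0 = P a b / \<pi> b" by simp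
  have "b \<in> X" using b suby by blast
  then have "\<pi> y0 \<noteq> 0" "\<pi> b \<noteq> 0" using pos y0 by auto
  then show "P x0 y0 * \<pi> b = P a b * \<pi> y0" using e frac_eq_eq by metis
qed

lemma stat_zero: "P \<in> stationary_kernels X \<pi> \<Longrightarrow> x \<notin> X \<or> y \<notin> X \<Longrightarrow> P x y = 0"
  unfolding stationary_kernels_def by blast

lemma struct_to_inv:
  assumes ok: "orb_ok X Orb" and kp: "kprops X Orb \<pi> K" and pos: "\<forall>x\<in>X. \<pi> x > 0"
    and PS: "P \<in> stationary_kernels X \<pi>" and st: "ostruct X Orb \<pi> P"
  shows "mat_mult X (mat_mult X K P) K = P"
proof (rule ext, rule ext)
  fix x y
  show "mat_mult X (mat_mult X K P) K x y = P x y"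
  proof (cases "x \<in> X \<and> y \<in> X")
    case False
    then show ?thesis using stat_zero[OF PS] by (auto simp: mat_mult_def)
  next
    case True
    then have x: "x \<in> X" and y: "y \<in> X" by auto
    have trm: "K x a * P a b * K b y = K y b * K x a * P x y" if a: "a \<in> X" and b: "b \<in> X" for a b
    proof (cases "K x a = 0 \<or> K b y = 0")
      case True
      have e2: "\<pi> b * K b y = \<pi> y * K y b" using kp_rev[OF kp] .
      have "\<pi> y > 0" using pos y by auto
      then have "K b y = 0 \<Longrightarrow> K y b = 0" using e2 by simp
      then show ?thesis using True by auto
    next
      case False
      then have "a \<in> Orb x" "y \<in> Orb b" using kp_supp[OF kp] by blast+
      then have ab: "a \<in> Orb x" "b \<in> Orb y" using orb_sym[OF ok b y] by auto
      have e1: "P a b * \<pi> y = P x y * \<pi> b" using st x y ab unfolding ostruct_def by metis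
      have e2: "\<pi> b * K b y = \<pi> y * K y b" using kp_rev[OF kp] .
      have "(K x a * P a b * K b y) * \<pi> b = K x a * P a b * (\<pi> b * K b y)" by (simp add: mult_ac)
      also have "\<dots> = K x a * K y b * (P a b * \<pi> y)" unfolding e2 by (simp add: mult_ac)
      also have "\<dots> = K x a * K y b * (P x y * \<pi> b)" unfolding e1 ..
      also have "\<dots> = (K y b * K x a * P x y) * \<pi> b" by (simp add: mult_ac)
      finally have "(K x a * P a b * K b y) * \<pi> b = (K y b * K x a * P x y) * \<pi> b" .
      moreover have "\<pi> b \<noteq> 0" using pos b by auto
      ultimately show ?thesis by simp
    qed
    have "mat_mult X (mat_mult X K P) K x y = (\<Sum>b\<in>X. (\<Sum>a\<in>X. K x a * P a b) * K b y)"
      using x y by (simp add: mat_mult_def)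
    also have "\<dots> = (\<Sum>b\<in>X. \<Sum>a\<in>X. K x a * P a b * K b y)"
      by (simp only: sum_distrib_right)
    also have "\<dots> = (\<Sum>b\<in>X. \<Sum>a\<in>X. K y b * K x a * P x y)"
      using trm by (intro sum.cong refl) auto
    also have "\<dots> = (\<Sum>b\<in>X. K y b) * (\<Sum>a\<in>X. K x a) * P x y"
      by (rule prod3[symmetric])
    also have "\<dots> = P x y" using kp_row[OF kp x] kp_row[OF kp y] by simp
    finally show ?thesis .
  qed
qed

lemma inv_char:
  assumes ok: "orb_ok X Orb" and kp: "kprops X Orb \<pi> K" and pos: "\<forall>x\<in>X. \<pi> x > 0"
  shows "invariant_set X \<pi> K = {P \<in> stationary_kernels X \<pi>. ostruct X Orb \<pi> P}"
  unfolding invariant_set_def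
  using inv_to_struct[OF ok kp pos] struct_to_inv[OF ok kp pos] by blast

lemma ga_ok:
  assumes ga: "group_action Gr X \<phi>" and fin: "finite X"
  shows "orb_ok X (orbit Gr \<phi>)"
proof -
  interpret group_action Gr X \<phi> by (rule ga)
  have sub: "orbit Gr \<phi> x \<subseteq> X" if "x \<in> X" for x
    using element_image that unfolding orbit_def by blast
  have eq: "orbit Gr \<phi> y = orbit Gr \<phi> x" if x: "x \<in> X" and y: "y \<in> orbit Gr \<phi> x" for x y
  proof -
    have yX: "y \<in> X" using sub x y by blast
    have xy: "x \<in> orbit Gr \<phi> y" using orbit_sym[OF x yX y] .
    show ?thesis
    proof
      show "orbit Gr \<phi> y \<subseteq> orbit Gr \<phi> x"
        using orbit_trans[OF x yX _ y] sub[OF yX] by blast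
      show "orbit Gr \<phi> x \<subseteq> orbit Gr \<phi> y"
        using orbit_trans[OF yX x _ xy] sub[OF x] by blast
    qed
  qed
  show ?thesis unfolding orb_ok_def using fin sub orbit_refl eq by blast
qed

lemma swap_pow:
  assumes "x \<noteq> y" "K x x = 0" "K y y = 0" "K x y = 1" "K y x = 1"
  shows "a \<in> {x,y} \<Longrightarrow> block_pow {x,y} K n x a = (if (even n) = (a = x) then 1 else 0)"
proof (induction n arbitrary: a)
  case 0
  then show ?case by simp
next
  case (Suc n)
  have "block_pow {x,y} K (Suc n) x a = block_pow {x,y} K n x x * K x a + block_pow {x,y} K n x y * K y a"
    using assms(1) by simp
  then show ?case using Suc assms by auto
qed

lemma swap_not_aperiodic:
  assumes "x \<noteq> y" "K x x = 0" "K y y = 0" "K x y = 1" "K y x = 1"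
  shows "\<not> aperiodic_block {x,y} K"
proof
  assume "aperiodic_block {x,y} K"
  then have g: "Gcd {n::nat. n \<ge> 1 \<and> block_pow {x,y} K n x x > 0} = 1"
    unfolding aperiodic_block_def by blast
  have "(2::nat) dvd Gcd {n::nat. n \<ge> 1 \<and> block_pow {x,y} K n x x > 0}"
  proof (rule Gcd_greatest)
    fix n assume "n \<in> {n::nat. n \<ge> 1 \<and> block_pow {x,y} K n x x > 0}"
    then have "block_pow {x,y} K n x x > 0" by simp
    then show "2 dvd n" using swap_pow[OF assms, of x n] by (auto split: if_splits)
  qed
  then show False using g by simp
qed

lemma gibbs_kprops:
  assumes ok: "orb_ok X (orbit Gr \<phi>)" and pos: "\<forall>x\<in>X. \<pi> x > 0"
  shows "kprops X (orbit Gr \<phi>) \<pi> (gibbs_kernel Gr \<phi> X \<pi>)"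
proof -
  let ?O = "orbit Gr \<phi>"
  let ?G = "gibbs_kernel Gr \<phi> X \<pi>"
  let ?Z = "\<lambda>x. \<Sum>z\<in>?O x. \<pi> z"
  have fin: "finite X" using ok_fin[OF ok] .
  have finO: "finite (?O x)" if "x \<in> X" for x using ok_sub[OF ok that] fin finite_subset by blast
  have Zpos: "?Z x > 0" if x: "x \<in> X" for x
    using finO[OF x] ok_refl[OF ok x] ok_sub[OF ok x] pos
    by (intro sum_pos) auto
  have k1: "\<forall>x y. ?G x y \<noteq> 0 \<longrightarrow> x \<in> X \<and> y \<in> X \<and> y \<in> ?O x"
    unfolding gibbs_kernel_def by auto
  have k2: "\<forall>x\<in>X. (\<Sum>y\<in>X. ?G x y) = 1"
  proof
    fix x assume x: "x \<in> X"
    have "(\<Sum>y\<in>X. ?G x y) = (\<Sum>y\<in>X. if y \<in> ?O x then \<pi> y / ?Z x else 0)"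
      using x unfolding gibbs_kernel_def by (intro sum.cong refl) auto
    also have "\<dots> = (\<Sum>y\<in>{y\<in>X. y \<in> ?O x}. \<pi> y / ?Z x)"
      using fin by (simp add: sum.inter_filter)
    also have "{y\<in>X. y \<in> ?O x} = ?O x" using ok_sub[OF ok x] by blast
    also have "(\<Sum>y\<in>?O x. \<pi> y / ?Z x) = ?Z x / ?Z x" by (rule sum_divide_distrib[symmetric])
    also have "\<dots> = 1" using Zpos[OF x] by simp
    finally show "(\<Sum>y\<in>X. ?G x y) = 1" .
  qed
  have k3: "\<forall>x y. 0 \<le> ?G x y"
  proof (intro allI)
    fix x y show "0 \<le> ?G x y"
      using pos Zpos unfolding gibbs_kernel_def
      by (cases "x \<in> X \<and> y \<in> X") (auto intro!: divide_nonneg_pos less_imp_le)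
  qed
  have k4: "\<forall>x y. \<pi> x * ?G x y = \<pi> y * ?G y x"
  proof (intro allI)
    fix x y
    show "\<pi> x * ?G x y = \<pi> y * ?G y x"
    proof (cases "x \<in> X \<and> y \<in> X \<and> y \<in> ?O x")
      case True
      then have "x \<in> ?O y" "?O y = ?O x" using orb_sym[OF ok] ok_eq[OF ok] by blast+
      then show ?thesis using True unfolding gibbs_kernel_def by simp
    next
      case False
      then have "\<not> (x \<in> X \<and> y \<in> X \<and> x \<in> ?O y)" using orb_sym[OF ok] by blast
      then show ?thesis using False unfolding gibbs_kernel_def by auto
    qed
  qed
  have k5: "\<forall>x\<in>X. \<forall>y\<in>?O x. (\<Sum>z\<in>X. ?G x z * ?G z y) > 0"
  proof (intro ballI)
    fix x y assume x: "x \<in> X" and y: "y \<in> ?O x"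
    have yX: "y \<in> X" using y ok_sub[OF ok x] by blast
    have "?G x x > 0" "?G x y > 0"
      using x y yX ok_refl[OF ok x] pos Zpos[OF x] unfolding gibbs_kernel_def by auto
    then have "0 < ?G x x * ?G x y" by simp
    also have "\<dots> \<le> (\<Sum>z\<in>X. ?G x z * ?G z y)"
      using k3 x fin by (intro member_le_sum) auto
    finally show "(\<Sum>z\<in>X. ?G x z * ?G z y) > 0" .
  qed
  show ?thesis unfolding kprops_def using k1 k2 k3 k4 k5 by blast
qed

lemma orbit_kprops:
  assumes ok: "orb_ok X (orbit Gr \<phi>)" and pos: "\<forall>x\<in>X. \<pi> x > 0"
    and acc: "\<forall>x\<in>X. \<forall>y\<in>X. 0 < acc x y \<and> acc x y \<le> 1 \<and> \<pi> x * acc x y = \<pi> y * acc y x"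
    and ap: "\<forall>x\<in>X. aperiodic_block (orbit Gr \<phi> x) (orbit_kernel Gr \<phi> X acc)"
  shows "kprops X (orbit Gr \<phi>) \<pi> (orbit_kernel Gr \<phi> X acc)"
proof -
  let ?O = "orbit Gr \<phi>"
  define K where "K = orbit_kernel Gr \<phi> X acc"
  define c where "c = (\<lambda>x. real (card (?O x)) - 1)"
  have fin: "finite X" using ok_fin[OF ok] .
  have finO: "finite (?O x)" if "x \<in> X" for x using ok_sub[OF ok that] fin finite_subset by blast
  have cardO: "card (?O x) \<ge> 1" if "x \<in> X" for x
    using finO[OF that] ok_refl[OF ok that] by (metis card_0_eq empty_iff less_one not_le)
  have cnn: "c x \<ge> 0" if "x \<in> X" for x using cardO[OF that] unfolding c_def by simp
  have cardrm: "real (card (?O x - {x})) = c x" if "x \<in> X" for x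
    using finO[OF that] ok_refl[OF ok that] cardO[OF that] unfolding c_def
    by (simp add: card_Diff_singleton of_nat_diff)
  have Koff: "K x y = acc x y / c x" if "x \<in> X" "y \<in> ?O x" "y \<noteq> x" for x y
    using that ok_sub[OF ok] unfolding K_def orbit_kernel_def c_def by auto
  have Kdiag: "K x x = 1 - (\<Sum>z\<in>?O x - {x}. acc x z / c x)" if "x \<in> X" for x
    using that unfolding K_def orbit_kernel_def c_def by auto
  have Kout: "K x y = 0" if "y \<noteq> x" "y \<notin> ?O x" for x y
    using that unfolding K_def orbit_kernel_def by auto
  have KX: "K x y = 0" if "x \<notin> X \<or> y \<notin> X" for x y
    using that unfolding K_def orbit_kernel_def by auto
  have ceq: "c y = c x" if "x \<in> X" "y \<in> ?O x" for x y
    unfolding c_def using ok_eq[OF ok that] by simp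
  have k1: "\<forall>x y. K x y \<noteq> 0 \<longrightarrow> x \<in> X \<and> y \<in> X \<and> y \<in> ?O x"
    using KX Kout ok_refl[OF ok] by metis
  have k2: "\<forall>x\<in>X. (\<Sum>y\<in>X. K x y) = 1"
  proof
    fix x assume x: "x \<in> X"
    have "(\<Sum>y\<in>X - {x}. K x y) = (\<Sum>y\<in>?O x - {x}. K x y)"
      using fin ok_sub[OF ok x] Kout by (intro sum.mono_neutral_right) auto
    also have "\<dots> = (\<Sum>y\<in>?O x - {x}. acc x y / c x)"
      using Koff x by (intro sum.cong refl) auto
    finally have "(\<Sum>y\<in>X - {x}. K x y) = (\<Sum>y\<in>?O x - {x}. acc x y / c x)" .
    then show "(\<Sum>y\<in>X. K x y) = 1"
      using sum.remove[OF fin x, of "K x"] Kdiag[OF x] by simp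
  qed
  have k3: "\<forall>x y. 0 \<le> K x y"
  proof (intro allI)
    fix x y
    show "0 \<le> K x y"
    proof (cases "x \<in> X \<and> y \<in> X")
      case False then show ?thesis using KX by simp
    next
      case True
      then have x: "x \<in> X" and y: "y \<in> X" by auto
      show ?thesis
      proof (cases "y = x")
        case True
        have "(\<Sum>z\<in>?O x - {x}. acc x z / c x) \<le> (\<Sum>z\<in>?O x - {x}. 1 / c x)"
          using acc x ok_sub[OF ok x] cnn[OF x] by (intro sum_mono divide_right_mono) auto
        also have "\<dots> = c x / c x" using cardrm[OF x] by simp
        also have "\<dots> \<le> 1" by (cases "c x = 0") auto
        finally show ?thesis using Kdiag[OF x] True by simp
      next
        case False
        show ?thesis
        proof (cases "y \<in> ?O x")
          case True
          have "0 < acc x y" using acc x y by blast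
          then show ?thesis using Koff[OF x True False] cnn[OF x] by simp
        next
          case nO: False
          then show ?thesis using Kout False by simp
        qed
      qed
    qed
  qed
  have k4: "\<forall>x y. \<pi> x * K x y = \<pi> y * K y x"
  proof (intro allI)
    fix x y
    show "\<pi> x * K x y = \<pi> y * K y x"
    proof (cases "x = y")
      case True then show ?thesis by simp
    next
      case xy: False
      show ?thesis
      proof (cases "x \<in> X \<and> y \<in> X \<and> y \<in> ?O x")
        case True
        then have x: "x \<in> X" and y: "y \<in> X" and yO: "y \<in> ?O x" by auto
        have xO: "x \<in> ?O y" using orb_sym[OF ok x y yO] .
        have "K x y = acc x y / c x" using Koff[OF x yO] xy by simp
        moreover have "K y x = acc y x / c x" using Koff[OF y xO] xy ceq[OF x yO] by simp
        moreover have "\<pi> x * acc x y = \<pi> y * acc y x" using acc x y by blast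
        ultimately show ?thesis by (simp add: mult.assoc[symmetric] times_divide_eq_right)
      next
        case False
        then have "\<not> (x \<in> X \<and> y \<in> X \<and> x \<in> ?O y)" using orb_sym[OF ok] by blast
        then have "K y x = 0" using KX Kout xy by metis
        moreover have "K x y = 0" using False KX Kout xy by metis
        ultimately show ?thesis by simp
      qed
    qed
  qed
  have k5: "\<forall>x\<in>X. \<forall>y\<in>?O x. (\<Sum>z\<in>X. K x z * K z y) > 0"
  proof (intro ballI)
    fix x y assume x: "x \<in> X" and yO: "y \<in> ?O x"
    have y: "y \<in> X" using yO ok_sub[OF ok x] by blast
    have le: "K x z * K z y \<le> (\<Sum>z\<in>X. K x z * K z y)" if "z \<in> X" for z
      using k3 that fin by (intro member_le_sum) (auto intro: mult_nonneg_nonneg)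
    show "(\<Sum>z\<in>X. K x z * K z y) > 0"
    proof (cases "\<exists>z\<in>?O x. z \<noteq> x \<and> z \<noteq> y")
      case True
      then obtain z where zO: "z \<in> ?O x" and zx: "z \<noteq> x" and zy: "z \<noteq> y" by blast
      have z: "z \<in> X" using zO ok_sub[OF ok x] by blast
      have "card {x, z} \<le> card (?O x)"
        using finO[OF x] zO ok_refl[OF ok x] by (intro card_mono) auto
      then have "c x > 0" using zx unfolding c_def by simp
      have yOz: "y \<in> ?O z" using yO ok_eq[OF ok x zO] by simp
      have "K x z > 0" using Koff[OF x zO zx] acc x z \<open>c x > 0\<close> by simp
      moreover have "K z y > 0" using Koff[OF z yOz] zy acc y z \<open>c x > 0\<close> ceq[OF x zO] by auto
      ultimately have "0 < K x z * K z y" by simp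
      then show ?thesis using le[OF z] by linarith
    next
      case False
      then have sub: "?O x \<subseteq> {x, y}" by blast
      show ?thesis
      proof (cases "y = x")
        case True
        then have Ox: "?O x = {x}" using sub ok_refl[OF ok x] by blast
        then have "K x x = 1" using Kdiag[OF x] by simp
        then show ?thesis using le[OF x] True by simp
      next
        case yx: False
        then have Ox: "?O x = {x, y}" using sub ok_refl[OF ok x] yO by blast
        have Oy: "?O y = {x, y}" using ok_eq[OF ok x yO] Ox by simp
        have c1: "c x = 1" "c y = 1" using Ox Oy yx unfolding c_def by auto
        have Kxy: "K x y = acc x y" using Koff[OF x yO] yx c1 by simp
        have Kyx: "K y x = acc y x" using Koff[OF y] Oy yx c1 by simp
        have Kxx: "K x x = 1 - acc x y" using Kdiag[OF x] Ox yx c1 by simp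
        have "{x,y} - {y} = {x}" using yx by auto
        then have Kyy: "K y y = 1 - acc y x" using Kdiag[OF y] Oy yx c1 by simp
        have "(\<Sum>z\<in>{x,y}. K x z * K z y) \<le> (\<Sum>z\<in>X. K x z * K z y)"
          using fin x y k3 by (intro sum_mono2) (auto intro: mult_nonneg_nonneg)
        moreover have "(\<Sum>z\<in>{x,y}. K x z * K z y) = K x x * K x y + K x y * K y y"
          using yx by simp
        moreover have "K x x * K x y + K x y * K y y > 0"
        proof (rule ccontr)
          assume "\<not> ?thesis"
          moreover have "K x x * K x y \<ge> 0" "K x y * K y y \<ge> 0" using k3 by auto
          ultimately have "K x x * K x y = 0" "K x y * K y y = 0" by linarith+
          moreover have "K x y > 0" using Kxy acc x y by simp
          ultimately have "K x x = 0" "K y y = 0" by simp+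
          then have "K x y = 1" "K y x = 1" using Kxx Kxy Kyy Kyx by simp+
          then have "\<not> aperiodic_block {x,y} K"
            using swap_not_aperiodic[OF yx[symmetric]] \<open>K x x = 0\<close> \<open>K y y = 0\<close> by blast
          then show False using ap x Ox unfolding K_def by metis
        qed
        ultimately show ?thesis by linarith
      qed
    qed
  qed
  show ?thesis unfolding kprops_def K_def[symmetric] using k1 k2 k3 k4 k5 by blast
qed


lemma mh_acc:
  fixes \<pi> :: "'a \<Rightarrow> real"
  assumes pos: "\<forall>x\<in>X. \<pi> x > 0"
  shows "\<forall>x\<in>X. \<forall>y\<in>X. 0 < min 1 (\<pi> y / \<pi> x) \<and> min 1 (\<pi> y / \<pi> x) \<le> 1
     \<and> \<pi> x * min 1 (\<pi> y / \<pi> x) = \<pi> y * min 1 (\<pi> x / \<pi> y)"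
proof (intro ballI conjI)
  fix x y assume "x \<in> X" "y \<in> X"
  then have a: "\<pi> x > 0" and b: "\<pi> y > 0" using pos by auto
  show "0 < min 1 (\<pi> y / \<pi> x)" using divide_pos_pos[OF b a] by simp
  show "min 1 (\<pi> y / \<pi> x) \<le> 1" by simp
  show "\<pi> x * min 1 (\<pi> y / \<pi> x) = \<pi> y * min 1 (\<pi> x / \<pi> y)"
  proof (cases "\<pi> y \<le> \<pi> x")
    case True
    then have "\<pi> y / \<pi> x \<le> 1" "1 \<le> \<pi> x / \<pi> y" using a b by (simp_all add: field_simps)
    then show ?thesis using a b by (simp add: min_def)
  next
    case False
    then have "1 \<le> \<pi> y / \<pi> x" "\<pi> x / \<pi> y \<le> 1" using a b by (simp_all add: field_simps)
    then show ?thesis using a b by (simp add: min_def)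
  qed
qed

lemma barker_acc:
  fixes \<pi> :: "'a \<Rightarrow> real"
  assumes pos: "\<forall>x\<in>X. \<pi> x > 0"
  shows "\<forall>x\<in>X. \<forall>y\<in>X. 0 < \<pi> y / (\<pi> x + \<pi> y) \<and> \<pi> y / (\<pi> x + \<pi> y) \<le> 1
     \<and> \<pi> x * (\<pi> y / (\<pi> x + \<pi> y)) = \<pi> y * (\<pi> x / (\<pi> y + \<pi> x))"
proof (intro ballI conjI)
  fix x y assume "x \<in> X" "y \<in> X"
  then have a: "\<pi> x > 0" and b: "\<pi> y > 0" using pos by auto
  have "0 < \<pi> x + \<pi> y" using a b by linarith
  then show "0 < \<pi> y / (\<pi> x + \<pi> y)" using divide_pos_pos[OF b] by blast
  show "\<pi> y / (\<pi> x + \<pi> y) \<le> 1" using a b by (simp add: field_simps)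
  show "\<pi> x * (\<pi> y / (\<pi> x + \<pi> y)) = \<pi> y * (\<pi> x / (\<pi> y + \<pi> x))"
    by (simp add: add.commute)
qed

theorem proposition5p1:
  fixes Gr :: "('g, 'b) monoid_scheme" and \<phi> :: "'g \<Rightarrow> 'a \<Rightarrow> 'a"
    and X :: "'a set" and \<pi> :: "'a \<Rightarrow> real"
  assumes "finite X"
    and "\<forall>x\<in>X. \<pi> x > 0"
    and "(\<Sum>x\<in>X. \<pi> x) = 1"
    and "group_action Gr X \<phi>"
    and "\<forall>x\<in>X. aperiodic_block (orbit Gr \<phi> x) (gibbs_kernel Gr \<phi> X \<pi>)"
    and "\<forall>x\<in>X. aperiodic_block (orbit Gr \<phi> x) (mh_kernel Gr \<phi> X \<pi>)"
    and "\<forall>x\<in>X. aperiodic_block (orbit Gr \<phi> x) (barker_kernel Gr \<phi> X \<pi>)"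
  shows "invariant_set X \<pi> (gibbs_kernel Gr \<phi> X \<pi>) = invariant_set X \<pi> (mh_kernel Gr \<phi> X \<pi>)
       \<and> invariant_set X \<pi> (mh_kernel Gr \<phi> X \<pi>) = invariant_set X \<pi> (barker_kernel Gr \<phi> X \<pi>)"
proof -
  have ok: "orb_ok X (orbit Gr \<phi>)" using ga_ok assms(4,1) by blast
  have pos: "\<forall>x\<in>X. \<pi> x > 0" using assms(2) .
  have g: "invariant_set X \<pi> (gibbs_kernel Gr \<phi> X \<pi>) = {P \<in> stationary_kernels X \<pi>. ostruct X (orbit Gr \<phi>) \<pi> P}"
    by (rule inv_char[OF ok gibbs_kprops[OF ok pos] pos])
  have m: "invariant_set X \<pi> (mh_kernel Gr \<phi> X \<pi>) = {P \<in> stationary_kernels X \<pi>. ostruct X (orbit Gr \<phi>) \<pi> P}"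
    unfolding mh_kernel_def
    by (rule inv_char[OF ok orbit_kprops[OF ok pos mh_acc[OF pos]] pos])
       (use assms(6) in \<open>simp add: mh_kernel_def\<close>)
  have b: "invariant_set X \<pi> (barker_kernel Gr \<phi> X \<pi>) = {P \<in> stationary_kernels X \<pi>. ostruct X (orbit Gr \<phi>) \<pi> P}"
    unfolding barker_kernel_def
    by (rule inv_char[OF ok orbit_kprops[OF ok pos barker_acc[OF pos]] pos])
       (use assms(7) in \<open>simp add: barker_kernel_def\<close>)
  show ?thesis using g m b by simp
qed

end
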